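(* Let $m,n,t\in\mathbf{Z}$ with $\gcd(m,n)=1$ satisfy $$t=\frac{-3(m^{3}+3m^{2}n-6mn^{2}+4n^{3})(m^{3}+3m^{2}n+3mn^{2}+4n^{3})(5m^{3}-3m^{2}n-3mn^{2}+2n^{3})}{(m^{3}-3mn^{2}+n^{3})^{3}}.$$ Then $m^{3}-3mn^{2}+n^{3}=\pm1$ or $m^{3}-3mn^{2}+n^{3}=\pm3$. *)

theory Defs
  imports Complex_Main
begin

end

theory Submission
  imports Defs "HOL-Computational_Algebra.Primes" "HOL-Number_Theory.Cong"
begin

lemma key_coprime:
  fixes q a d m n u v u' v' :: int
  assumes cop: "coprime m n" and n3: "\<not> 3 dvd q" and qd: "q dvd d"
    and e1: "u*d + v*a = 9*(n*n*n*n*n)" and e2: "u'*d + v'*a = 9*(m*m*m*m*m)"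
  shows "coprime q a"
proof -
  define g where "g = gcd q a"
  have gq: "g dvd q" and ga: "g dvd a" unfolding g_def by auto
  have p3: "prime (3::int)" by simp
  have c3: "coprime 3 q"
    using prime_imp_coprime[OF p3 n3] .
  have c9: "coprime (9::int) q"
  proof -
    have "coprime ((3::int)^2) q" using c3 by (simp only: coprime_power_left_iff) simp
    thus ?thesis by simp
  qed
  have cg: "coprime (9::int) g" using c9 gq coprime_divisors dvd_refl by blast
  have gd: "g dvd d" using gq qd by (rule dvd_trans)
  have n5: "n*n*n*n*n = n^5" "m*m*m*m*m = m^5" by (simp_all add: numeral_eq_Suc mult.assoc)
  have "g dvd 9*n^5" unfolding n5[symmetric] e1[symmetric] using gd ga by simp
  hence g1: "g dvd n^5" using cg by (metis coprime_commute coprime_dvd_mult_left_iff coprime_dvd_mult_right_iff)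
  have "g dvd 9*m^5" unfolding n5[symmetric] e2[symmetric] using gd ga by simp
  hence g2: "g dvd m^5" using cg by (metis coprime_commute coprime_dvd_mult_left_iff coprime_dvd_mult_right_iff)
  have "coprime (m^5) (n^5)" using cop by simp
  hence "is_unit g" using g1 g2 by (meson coprime_common_divisor)
  thus ?thesis unfolding g_def by (simp add: is_unit_gcd coprime_iff_gcd_eq_1)
qed

lemma D_odd:
  fixes m n :: int
  assumes "even (m^3 - 3*m*n^2 + n^3)"
  shows "even m \<and> even n"
  using assms by (cases "even m"; cases "even n") auto

lemma D_9:
  fixes m n :: int
  assumes "9 dvd (m^3 - 3*m*n^2 + n^3)"
  shows "3 dvd m \<and> 3 dvd n"
proof -
  have "(m^3 - 3*m*n^2 + n^3) mod 9 = ((m mod 9)^3 - 3*(m mod 9)*(n mod 9)^2 + (n mod 9)^3) mod 9"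
  proof -
    have "[m^3 - 3*m*n^2 + n^3 = (m mod 9)^3 - 3*(m mod 9)*(n mod 9)^2 + (n mod 9)^3] (mod 9)"
      by (intro cong_add cong_diff cong_mult cong_pow cong_refl) (simp_all add: cong_def)
    thus ?thesis by (simp add: cong_def)
  qed
  hence h: "((m mod 9)^3 - 3*(m mod 9)*(n mod 9)^2 + (n mod 9)^3) mod 9 = 0"
    using assms by simp
  have r1: "m mod 9 \<in> {0..8}" and r2: "n mod 9 \<in> {0..8}" by auto
  have "3 dvd (m mod 9) \<and> 3 dvd (n mod 9)"
  proof -
    obtain a b where a: "a = m mod 9" and b: "b = n mod 9" by blast
    have "a \<in> {0..8}" "b \<in> {0..8}" using r1 r2 a b by auto
    moreover have "(a^3 - 3*a*b^2 + b^3) mod 9 = 0" using h a b by simp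
    ultimately have "3 dvd a \<and> 3 dvd b"
    proof -
      assume ab: "a \<in> {0..8}" "b \<in> {0..8}" and e: "(a^3 - 3*a*b^2 + b^3) mod 9 = 0"
      have "a = 0 \<or> a = 1 \<or> a = 2 \<or> a = 3 \<or> a = 4 \<or> a = 5 \<or> a = 6 \<or> a = 7 \<or> a = 8"
        using ab(1) by auto
      moreover have "b = 0 \<or> b = 1 \<or> b = 2 \<or> b = 3 \<or> b = 4 \<or> b = 5 \<or> b = 6 \<or> b = 7 \<or> b = 8"
        using ab(2) by auto
      ultimately show ?thesis using e by (elim disjE) simp_all
    qed
    thus ?thesis using a b by simp
  qed
  thus ?thesis using dvd_mod_iff[of 3 9 m] dvd_mod_iff[of 3 9 n] by simp
qed



theorem lemma5p1:
  fixes m n t :: int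
  assumes "gcd m n = 1"
    and "of_int t = (of_int (-3 * (m^3 + 3*m^2*n - 6*m*n^2 + 4*n^3)
                          * (m^3 + 3*m^2*n + 3*m*n^2 + 4*n^3)
                          * (5*m^3 - 3*m^2*n - 3*m*n^2 + 2*n^3)) :: rat)
                     / of_int ((m^3 - 3*m*n^2 + n^3)^3)"
  shows "m^3 - 3*m*n^2 + n^3 \<in> {1, -1, 3, -3}"
proof -
  define D where "D = m^3 - 3*m*n^2 + n^3"
  define A where "A = m^3 + 3*m^2*n - 6*m*n^2 + 4*n^3"
  define B where "B = m^3 + 3*m^2*n + 3*m*n^2 + 4*n^3"
  define C where "C = 5*m^3 - 3*m^2*n - 3*m*n^2 + 2*n^3"
  have cop: "coprime m n" using assms(1) by (simp add: coprime_iff_gcd_eq_1)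
  have Dnz: "D \<noteq> 0"
  proof
    assume "D = 0"
    hence "even m \<and> even n" using D_odd[of m n] unfolding D_def by simp
    thus False using cop coprime_common_divisor[of m n 2] by auto
  qed
  have "of_int t = (of_int (-3 * A * B * C) :: rat) / of_int (D^3)"
    using assms(2) unfolding A_def B_def C_def D_def .
  hence "(of_int t :: rat) * of_int (D^3) = of_int (-3 * A * B * C)"
    using Dnz by (simp add: field_simps)
  hence eqt: "t * D^3 = -3 * A * B * C" by (metis of_int_eq_iff of_int_mult)
  have "D dvd t * D^3" by (simp add: power3_eq_cube)
  hence "D dvd -(3 * (A * B * C))" unfolding eqt by (simp add: mult.assoc)
  hence "D dvd 3 * (A * B * C)" by (simp only: dvd_minus_iff)
  define q where "q = (if 3 dvd D then D div 3 else D)"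
  have D9: "\<not> 9 dvd D"
  proof
    assume "9 dvd D"
    hence "3 dvd m \<and> 3 dvd n" using D_9[of m n] unfolding D_def by simp
    thus False using cop coprime_common_divisor[of m n 3] by auto
  qed
  have Dq: "D = q \<or> D = 3 * q" unfolding q_def by auto
  have q3: "\<not> 3 dvd q"
  proof
    assume "3 dvd q"
    then obtain k where "q = 3 * k" by blast
    thus False using D9 q_def by (cases "3 dvd D") auto
  qed
  have qD: "q dvd D" unfolding q_def by auto
  have cA: "coprime q A"
    by (rule key_coprime[OF cop q3 qD, where u="-7*n^2 + 3*m*n + m^2" and v="4*n^2 - m^2"
          and u'="12*n^2 - 14*m*n + 7*m^2" and v'="-3*n^2 + 8*m*n + 2*m^2"])
       (simp_all add: D_def A_def algebra_simps power2_eq_square power3_eq_cube)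
  have cB: "coprime q B"
    by (rule key_coprime[OF cop q3 qD, where u="n^2 + m*n" and v="2*n^2 - m*n"
          and u'="28*n^2 + 9*m*n + 20*m^2" and v'="-7*n^2 + 24*m*n - 11*m^2"])
       (simp_all add: D_def B_def algebra_simps power2_eq_square power3_eq_cube)
  have cC: "coprime q C"
    by (rule key_coprime[OF cop q3 qD, where u="-15*n^2 - 7*m*n + 20*m^2" and v="12*n^2 - m*n - 4*m^2"
          and u'="2*n^2 - m*n - 6*m^2" and v'="3*m^2 + 2*m*n - n^2"])
       (simp_all add: D_def C_def algebra_simps power2_eq_square power3_eq_cube)
  have p3: "prime (3::int)" by simp
  have c3: "coprime q 3" using prime_imp_coprime[OF p3 q3] by (simp add: coprime_commute)
  have "coprime q (3 * (A * B * C))" using cA cB cC c3 by simp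
  moreover have "q dvd 3 * (A * B * C)" using qD \<open>D dvd 3 * (A * B * C)\<close> by (rule dvd_trans)
  ultimately have "is_unit q" by (meson coprime_common_divisor dvd_refl)
  hence "q = 1 \<or> q = -1" by auto
  thus ?thesis using Dq unfolding D_def by auto
qed

end
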